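(* For every real constant $\alpha$, there exist a conjunctive query $Q$, a set of functional dependencies on its relations, and a database $D$ satisfying these dependencies, such that $|Q(D)| > \mathrm{rmax}(Q,D)^{\alpha\, C(chase(Q))}$.
   Context: A conjunctive query has the form $Q = R_0(u_0)\leftarrow A_1\wedge\cdots\wedge A_m$, body atoms $A_i=R_{j(i)}(u_i)$ with variable lists $u_i$; $Q(D)$ is the set of $\theta(u_0)$ over all assignments $\theta$ of universe elements to variables with $\theta(u_i)\in R_{j(i)}^D$ for all $i\ge1$; $\mathrm{rmax}(Q,D)$ is the size of the largest relation among those named in the body. A functional dependency $V\to a$ on relation $R$ is satisfied if tuples of $R^D$ agreeing on positions $V$ agree on position $a$; it induces for each atom $R(u)$ the dependency $\{u[p]:p\in V\}\to u[a]$ among query variables. $chase(Q)$ is the query obtained by the standard chase procedure (repeatedly identifying variables forced equal by the FDs among atoms of the same relation and removing duplicate atoms); it returns the same answer as $Q$ on every database satisfying the FDs. Valid coloring: a map $\mathcal{L}$ assigning to each query variable $X$ a finite set $\mathcal{L}(X)$ of colors such that for every induced dependency $X_1,\ldots,X_j\to Y$, $\mathcal{L}(Y)\subseteq\bigcup_i\mathcal{L}(X_i)$. Color number: $C(Q)=\max_{\mathcal{L}} \frac{|\bigcup_{X\in u_0}\mathcal{L}(X)|}{\max_{i\ge1}|\bigcup_{X\in u_i}\mathcal{L}(X)|}$, the maximum over valid colorings with positive denominator. *)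

theory Defs
  imports Complex_Main
begin

text \<open>An atom is a pair (relation name, list of variables). A conjunctive query is a pair
  (head atom, list of body atoms).
  A functional dependency (R, V, a) on relation R says positions V determine position a.
  An arity function fixes the schema.\<close>

type_synonym atom = "nat \<times> nat list"
type_synonym cquery = "atom \<times> atom list"
type_synonym database = "nat \<Rightarrow> nat list set"
type_synonym fd = "nat \<times> nat set \<times> nat"

definition head_vars :: "cquery \<Rightarrow> nat list" where
  "head_vars Q = snd (fst Q)"

definition body :: "cquery \<Rightarrow> atom list" where
  "body Q = snd Q"

definition body_vars :: "cquery \<Rightarrow> nat set" where
  "body_vars Q = (\<Union>(R, u)\<in>set (body Q). set u)"

definition cq_wf :: "(nat \<Rightarrow> nat) \<Rightarrow> cquery \<Rightarrow> bool" where
  "cq_wf ar Q \<longleftrightarrow> body Q \<noteq> [] \<and> (\<forall>(R, u)\<in>set (body Q). length u = ar R)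
     \<and> set (head_vars Q) \<subseteq> body_vars Q"

definition fds_wf :: "(nat \<Rightarrow> nat) \<Rightarrow> fd set \<Rightarrow> bool" where
  "fds_wf ar F \<longleftrightarrow> (\<forall>(R, V, a)\<in>F. V \<subseteq> {..<ar R} \<and> a < ar R)"

definition db_wf :: "(nat \<Rightarrow> nat) \<Rightarrow> database \<Rightarrow> bool" where
  "db_wf ar D \<longleftrightarrow> (\<forall>R. finite (D R) \<and> (\<forall>t\<in>D R. length t = ar R))"

definition satisfies_fds :: "database \<Rightarrow> fd set \<Rightarrow> bool" where
  "satisfies_fds D F \<longleftrightarrow> (\<forall>(R, V, a)\<in>F. \<forall>t\<in>D R. \<forall>t'\<in>D R.
      (\<forall>p\<in>V. t ! p = t' ! p) \<longrightarrow> t ! a = t' ! a)"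

definition answer :: "cquery \<Rightarrow> database \<Rightarrow> nat list set" where
  "answer Q D = {map \<theta> (head_vars Q) | \<theta>. \<forall>(R, u)\<in>set (body Q). map \<theta> u \<in> D R}"

definition rmax :: "cquery \<Rightarrow> database \<Rightarrow> nat" where
  "rmax Q D = Max ((\<lambda>(R, u). card (D R)) ` set (body Q))"

definition induced_deps :: "fd set \<Rightarrow> cquery \<Rightarrow> (nat set \<times> nat) set" where
  "induced_deps F Q = {((\<lambda>p. u ! p) ` V, u ! a) | R u V a.
      (R, u) \<in> set (body Q) \<and> (R, V, a) \<in> F}"

definition valid_coloring :: "fd set \<Rightarrow> cquery \<Rightarrow> (nat \<Rightarrow> nat set) \<Rightarrow> bool" where
  "valid_coloring F Q L \<longleftrightarrow> (\<forall>X. finite (L X)) \<and>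
     (\<forall>(Xs, Y)\<in>induced_deps F Q. L Y \<subseteq> (\<Union>X\<in>Xs. L X))"

definition colors_of :: "(nat \<Rightarrow> nat set) \<Rightarrow> nat list \<Rightarrow> nat set" where
  "colors_of L u = (\<Union>X\<in>set u. L X)"

definition coloring_ratio :: "cquery \<Rightarrow> (nat \<Rightarrow> nat set) \<Rightarrow> real" where
  "coloring_ratio Q L = real (card (colors_of L (head_vars Q)))
      / real (Max ((\<lambda>(R, u). card (colors_of L u)) ` set (body Q)))"

definition color_number :: "fd set \<Rightarrow> cquery \<Rightarrow> real" where
  "color_number F Q = Sup {coloring_ratio Q L | L. valid_coloring F Q L \<and>
      Max ((\<lambda>(R, u). card (colors_of L u)) ` set (body Q)) > 0}"

definition rename_query :: "nat \<Rightarrow> nat \<Rightarrow> cquery \<Rightarrow> cquery" where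
  "rename_query x y Q = (let s = (\<lambda>v. if v = x then y else v) in
     ((fst (fst Q), map s (head_vars Q)),
      remdups (map (\<lambda>(R, u). (R, map s u)) (body Q))))"

definition dedup_query :: "cquery \<Rightarrow> cquery" where
  "dedup_query Q = (fst Q, remdups (body Q))"

definition chase_step :: "fd set \<Rightarrow> cquery \<Rightarrow> cquery \<Rightarrow> bool" where
  "chase_step F Q Q' \<longleftrightarrow> (\<exists>R V a u u'. (R, V, a) \<in> F \<and>
      (R, u) \<in> set (body Q) \<and> (R, u') \<in> set (body Q) \<and>
      (\<forall>p\<in>V. u ! p = u' ! p) \<and> u ! a \<noteq> u' ! a \<and>
      Q' = rename_query (u ! a) (u' ! a) Q)"

definition chase_result :: "fd set \<Rightarrow> cquery \<Rightarrow> cquery \<Rightarrow> bool" where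
  "chase_result F Q Q' \<longleftrightarrow> (chase_step F)\<^sup>*\<^sup>* (dedup_query Q) Q' \<and> (\<nexists>Q''. chase_step F Q' Q'')"

definition chase :: "fd set \<Rightarrow> cquery \<Rightarrow> cquery" where
  "chase F Q = (SOME Q'. chase_result F Q Q')"

end

theory Submission
  imports Defs
begin
unbundle bit_operations_syntax



lemma xor_lt: "(a::nat) < 2^k \<Longrightarrow> b < 2^k \<Longrightarrow> a XOR b < 2^k"
  by (metis take_bit_nat_eq_self_iff take_bit_xor)

lemma xor_cancel: "((a::nat) XOR b) XOR b = a"
  by (simp add: xor.assoc)

definition dot :: "nat \<Rightarrow> nat \<Rightarrow> nat \<Rightarrow> nat" where
  "dot k s v = (\<Sum>i<k. of_bool (bit s i \<and> bit v i)) mod 2"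

lemma dot_lin: "dot k s (a XOR b) = (dot k s a + dot k s b) mod 2"
proof -
  have "(\<Sum>i<k. of_bool (bit s i \<and> bit (a XOR b) i)::nat) mod 2
      = (\<Sum>i<k. of_bool (bit s i \<and> bit (a XOR b) i) mod 2) mod 2"
    by (simp add: mod_sum_eq)
  also have "\<dots> = (\<Sum>i<k. (of_bool (bit s i \<and> bit a i) + of_bool (bit s i \<and> bit b i)) mod 2) mod 2"
    by (rule arg_cong[where f="\<lambda>x. x mod 2"], rule sum.cong) (auto simp: bit_xor_iff)
  also have "\<dots> = (\<Sum>i<k. (of_bool (bit s i \<and> bit a i) + of_bool (bit s i \<and> bit b i))::nat) mod 2"
    by (simp add: mod_sum_eq)
  also have "\<dots> = ((\<Sum>i<k. of_bool (bit s i \<and> bit a i)) + (\<Sum>i<k. of_bool (bit s i \<and> bit b i))) mod 2"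
    by (simp add: sum.distrib)
  finally show ?thesis unfolding dot_def by (simp add: mod_add_eq)
qed

lemma dot_le: "dot k s v \<le> 1" unfolding dot_def by simp

lemma dot_exp: "j < k \<Longrightarrow> dot k s (2^j) = of_bool (bit s j)"
proof -
  assume j: "j < k"
  have "(\<Sum>i<k. of_bool (bit s i \<and> bit ((2::nat)^j) i)::nat) = (\<Sum>i\<in>{j}. of_bool (bit s i))"
    by (rule sum.mono_neutral_cong_right) (auto simp: j bit_exp_iff)
  thus ?thesis unfolding dot_def by simp
qed

lemma dot_inj: "s < 2^k \<Longrightarrow> t < 2^k \<Longrightarrow> (\<forall>v<2^k. dot k s v = dot k t v) \<Longrightarrow> s = t"
proof (rule bit_eqI)
  fix n assume s: "s < 2^k" and t: "t < 2^k" and h: "\<forall>v<2^k. dot k s v = dot k t v"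
  show "bit s n = bit t n"
  proof (cases "n < k")
    case True
    have "(2::nat)^n < 2^k" using True by simp
    with h have "dot k s (2^n) = dot k t (2^n)" by blast
    thus ?thesis using dot_exp[OF True] by (auto simp: of_bool_def split: if_splits)
  next
    case False
    then show ?thesis using s t
      by (metis bit_take_bit_iff take_bit_nat_eq_self_iff)
  qed
qed



definition Qk :: "nat \<Rightarrow> cquery" where
  "Qk k = ((0, [0..<2^k]), [(0, [a, b, a XOR b]). a \<leftarrow> [0..<2^k], b \<leftarrow> [0..<2^k]])"
definition FF :: "fd set" where "FF = {(0, {0,1}, 2), (0, {0,2}, 1), (0, {1,2}, 0)}"
definition DD :: database where
  "DD = (\<lambda>R. if R = 0 then {[0,0,0],[0,1,1],[1,0,1],[1,1,0]} else {})"

lemma body_Qk: "set (body (Qk k)) = {(0,[a,b,a XOR b]) | a b. a<2^k \<and> b<2^k}"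
  unfolding body_def Qk_def by auto

lemma head_Qk: "head_vars (Qk k) = [0..<2^k]"
  unfolding head_vars_def Qk_def by simp

lemma body_dedup: "set (body (dedup_query Q)) = set (body Q)" "head_vars (dedup_query Q) = head_vars Q"
  unfolding body_def dedup_query_def head_vars_def by auto

lemma no_step: "\<not> chase_step FF (dedup_query (Qk k)) Q''"
proof
  assume "chase_step FF (dedup_query (Qk k)) Q''"
  then obtain R V a u u' where h: "(R, V, a) \<in> FF" "(R, u) \<in> set (body (Qk k))"
     "(R, u') \<in> set (body (Qk k))" "\<forall>p\<in>V. u ! p = u' ! p" "u ! a \<noteq> u' ! a"
    unfolding chase_step_def body_dedup by blast
  from h(2,3) obtain x y x' y' where u: "u = [x,y,x XOR y]" "u' = [x',y',x' XOR y']"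
    unfolding body_Qk by auto
  from h(1,4,5) show False unfolding FF_def u
    by (auto, metis xor_cancel xor.commute)+
qed

lemma chase_Qk: "chase FF (Qk k) = dedup_query (Qk k)"
proof -
  have "chase_result FF (Qk k) Q' \<longleftrightarrow> Q' = dedup_query (Qk k)" for Q'
  proof
    assume "chase_result FF (Qk k) Q'"
    then have "(chase_step FF)\<^sup>*\<^sup>* (dedup_query (Qk k)) Q'" unfolding chase_result_def by simp
    then show "Q' = dedup_query (Qk k)"
      by (cases rule: converse_rtranclpE) (auto simp: no_step)
  next
    assume "Q' = dedup_query (Qk k)"
    then show "chase_result FF (Qk k) Q'" unfolding chase_result_def using no_step by auto
  qed
  then have "chase_result FF (Qk k) = (\<lambda>Q'. Q' = dedup_query (Qk k))" by blast
  then show ?thesis unfolding chase_def by simp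
qed

lemma cn_dedup: "color_number F (dedup_query Q) = color_number F Q"
  unfolding color_number_def coloring_ratio_def valid_coloring_def induced_deps_def body_dedup
  by simp

lemma dep_xor: assumes "valid_coloring FF (Qk k) L" "v < 2^k" "w < 2^k"
  shows "L (v XOR w) \<subseteq> L v \<union> L w"
proof -
  have "((\<lambda>p. [v,w,v XOR w] ! p) ` {0,1}, [v,w,v XOR w] ! 2) \<in> induced_deps FF (Qk k)"
    unfolding induced_deps_def body_Qk FF_def using assms(2,3) by blast
  moreover have "(\<lambda>p. [v,w,v XOR w] ! p) ` {0,1} = {v,w}" by auto
  ultimately show ?thesis using assms(1) unfolding valid_coloring_def by fastforce
qed



lemma half_count:
  assumes V: "valid_coloring FF (Qk k) L" and g: "g < 2^k" "c \<in> L g"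
  shows "2^k \<le> 2 * card {v. v < 2^k \<and> c \<in> L v}"
proof -
  let ?T = "{v. v < 2^k \<and> c \<notin> L v}" and ?P = "{v. v < 2^k \<and> c \<in> L v}"
  have "(\<lambda>v. v XOR g) ` ?T \<subseteq> ?P"
  proof
    fix x assume "x \<in> (\<lambda>v. v XOR g) ` ?T"
    then obtain v where v: "v < 2^k" "c \<notin> L v" "x = v XOR g" by auto
    have x: "x < 2^k" using v g xor_lt by blast
    have "L (v XOR x) \<subseteq> L v \<union> L x" using dep_xor[OF V v(1) x] .
    moreover have "v XOR x = g" using v(3) by (simp flip: xor.assoc)
    ultimately show "x \<in> ?P" using x g v by blast
  qed
  moreover have "inj_on (\<lambda>v. v XOR g) ?T"
    by (rule inj_onI) (metis xor_cancel)
  ultimately have "card ?T \<le> card ?P"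
  proof -
    assume a: "(\<lambda>v. v XOR g) ` ?T \<subseteq> ?P" "inj_on (\<lambda>v. v XOR g) ?T"
    have "card ((\<lambda>v. v XOR g) ` ?T) \<le> card ?P" by (rule card_mono[OF _ a(1)]) simp
    then show ?thesis using card_image[OF a(2)] by simp
  qed
  moreover have "card ?T + card ?P = 2^k"
  proof -
    have "?T \<union> ?P = {..<2^k}" by auto
    moreover have "?T \<inter> ?P = {}" by auto
    ultimately show ?thesis using card_Un_disjoint[of ?T ?P] by simp
  qed
  ultimately show ?thesis by linarith
qed

lemma big_atom:
  assumes V: "valid_coloring FF (Qk k) L"
  shows "\<exists>a<2^k. card (\<Union>v<2^k. L v) \<le> 2 * card (L a)"
proof (rule ccontr)
  let ?A = "\<Union>v<2^k. L v"
  assume "\<not> ?thesis"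
  then have lt: "\<And>a. a < 2^k \<Longrightarrow> 2 * card (L a) < card ?A" by force
  have fin: "finite ?A" using V unfolding valid_coloring_def by auto
  have "(\<Sum>v<2^k. card (L v)) = (\<Sum>v<(2::nat)^k. \<Sum>c\<in>?A. of_bool (c \<in> L v)::nat)"
  proof (rule sum.cong)
    fix v assume "v \<in> {..<(2::nat)^k}"
    then have "L v \<subseteq> ?A" by auto
    then have "L v = ?A \<inter> {c. c \<in> L v}" by auto
    then show "card (L v) = (\<Sum>c\<in>?A. of_bool (c \<in> L v))"
    proof -
      have "(\<Sum>c\<in>?A. of_bool (c \<in> L v)::nat) = card (?A \<inter> {c. c \<in> L v})"
        using fin by simp
      then show ?thesis using \<open>L v = ?A \<inter> {c. c \<in> L v}\<close> by simp
    qed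
  qed simp
  also have "\<dots> = (\<Sum>c\<in>?A. \<Sum>v<(2::nat)^k. of_bool (c \<in> L v)::nat)" by (rule sum.swap)
  also have "\<dots> = (\<Sum>c\<in>?A. card {v. v < 2^k \<and> c \<in> L v})"
    by (rule sum.cong) (simp_all add: lessThan_def Collect_conj_eq)
  finally have eq: "(\<Sum>v<2^k. card (L v)) = (\<Sum>c\<in>?A. card {v. v < 2^k \<and> c \<in> L v})" .
  have "(\<Sum>c\<in>?A. (2::nat)^k) \<le> (\<Sum>c\<in>?A. 2 * card {v. v < 2^k \<and> c \<in> L v})"
    by (rule sum_mono) (use half_count[OF V] in auto)
  then have "2^k * card ?A \<le> 2 * (\<Sum>v<2^k. card (L v))"
    by (simp add: eq sum_distrib_left mult.commute)
  moreover have "(\<Sum>v<(2::nat)^k. 2 * card (L v)) < (\<Sum>v<(2::nat)^k. card ?A)"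
    by (rule sum_strict_mono) (auto simp: lt lessThan_empty_iff)
  ultimately show False by (simp add: sum_distrib_left)
qed



lemma ratio_le:
  assumes V: "valid_coloring FF (Qk k) L"
      and M: "Max ((\<lambda>(R, u). card (colors_of L u)) ` set (body (Qk k))) > 0"
  shows "coloring_ratio (Qk k) L \<le> 2 \<and> coloring_ratio (Qk k) L \<ge> 0"
proof -
  let ?M = "Max ((\<lambda>(R, u). card (colors_of L u)) ` set (body (Qk k)))"
  obtain a where a: "a < 2^k" "card (\<Union>v<2^k. L v) \<le> 2 * card (L a)" using big_atom[OF V] by blast
  have fin: "finite (L x)" for x using V unfolding valid_coloring_def by auto
  have mem: "(0, [a, a, a XOR a]) \<in> set (body (Qk k))" unfolding body_Qk using a by blast
  have "card (colors_of L [a, a, a XOR a]) \<le> ?M"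
    by (rule Max_ge) (use mem in force)+
  moreover have "card (L a) \<le> card (colors_of L [a, a, a XOR a])"
    by (rule card_mono) (auto simp: colors_of_def fin)
  ultimately have "card (\<Union>v<2^k. L v) \<le> 2 * ?M" using a by linarith
  moreover have "colors_of L (head_vars (Qk k)) = (\<Union>v<2^k. L v)"
    unfolding head_Qk colors_of_def by auto
  ultimately have "real (card (colors_of L (head_vars (Qk k)))) \<le> 2 * real ?M" by simp
  then show ?thesis unfolding coloring_ratio_def using M by (simp add: divide_le_eq)
qed

lemma cn_bounds: "0 \<le> color_number FF (Qk k) \<and> color_number FF (Qk k) \<le> 2"
proof -
  let ?S = "{coloring_ratio (Qk k) L | L. valid_coloring FF (Qk k) L \<and>
      Max ((\<lambda>(R, u). card (colors_of L u)) ` set (body (Qk k))) > 0}"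
  let ?L0 = "\<lambda>_::nat. {0::nat}"
  have v0: "valid_coloring FF (Qk k) ?L0"
    unfolding valid_coloring_def induced_deps_def FF_def by auto
  have m0: "Max ((\<lambda>(R, u). card (colors_of ?L0 u)) ` set (body (Qk k))) > 0"
  proof -
    have mem: "(0, [0, 0, 0 XOR 0]) \<in> set (body (Qk k))" unfolding body_Qk by force
    have "card (colors_of ?L0 [0, 0, 0 XOR 0]) \<le> Max ((\<lambda>(R, u). card (colors_of ?L0 u)) ` set (body (Qk k)))"
      by (rule Max_ge) (use mem in force)+
    moreover have "card (colors_of ?L0 [0, 0, 0 XOR 0]) = 1" by (simp add: colors_of_def)
    ultimately show ?thesis by linarith
  qed
  have ne: "?S \<noteq> {}" using v0 m0 by blast
  have ub: "\<And>x. x \<in> ?S \<Longrightarrow> x \<le> 2" using ratio_le by blast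
  have lb: "\<And>x. x \<in> ?S \<Longrightarrow> 0 \<le> x" using ratio_le by blast
  have "Sup ?S \<le> 2" by (rule cSup_least[OF ne]) (use ub in blast)
  moreover have "0 \<le> Sup ?S"
  proof -
    obtain x where "x \<in> ?S" using ne by blast
    moreover have "bdd_above ?S" using ub by (auto simp: bdd_above_def)
    ultimately have "x \<le> Sup ?S" by (rule cSup_upper)
    with lb \<open>x \<in> ?S\<close> show ?thesis by force
  qed
  ultimately show ?thesis unfolding color_number_def by simp
qed



lemma card_DD: "card (DD 0) = 4" unfolding DD_def by simp

lemma rmax_Qk: "rmax (Qk k) DD = 4"
proof -
  have mem: "(0, [0, 0, 0 XOR 0]) \<in> set (body (Qk k))" unfolding body_Qk by force
  have h: "\<And>x. x \<in> set (body (Qk k)) \<Longrightarrow> (\<lambda>(R, u). card (DD R)) x = 4"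
  proof -
    fix x assume "x \<in> set (body (Qk k))"
    then have "fst x = 0" unfolding body_Qk by auto
    then show "(\<lambda>(R, u). card (DD R)) x = 4" using card_DD by (cases x) simp
  qed
  have "(\<lambda>(R, u). card (DD R)) ` set (body (Qk k)) = {4}"
  proof
    show "(\<lambda>(R, u). card (DD R)) ` set (body (Qk k)) \<subseteq> {4}" using h by blast
    show "{4} \<subseteq> (\<lambda>(R, u). card (DD R)) ` set (body (Qk k))" using h[OF mem] mem
      by (metis empty_subsetI image_eqI insert_subset)
  qed
  then show ?thesis unfolding rmax_def by simp
qed
lemma answer_big: "2^k \<le> card (answer (Qk k) DD)"
proof -
  let ?f = "\<lambda>s. map (dot k s) [0..<2^k]"
  have sub: "?f ` {..<2^k} \<subseteq> answer (Qk k) DD"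
  proof
    fix x assume "x \<in> ?f ` {..<2^k}"
    then obtain s where x: "x = ?f s" by auto
    have "\<forall>(R, u)\<in>set (body (Qk k)). map (dot k s) u \<in> DD R"
    proof (clarsimp simp: body_Qk)
      fix a b :: nat
      have "dot k s a \<le> 1" "dot k s b \<le> 1" by (rule dot_le)+
      then show "[dot k s a, dot k s b, dot k s (a XOR b)] \<in> DD 0"
        unfolding dot_lin DD_def
        by (cases "dot k s a"; cases "dot k s b") auto
    qed
    then show "x \<in> answer (Qk k) DD" unfolding answer_def head_Qk x by blast
  qed
  have inj: "inj_on ?f {..<2^k}"
  proof (rule inj_onI)
    fix s t assume "s \<in> {..<(2::nat)^k}" "t \<in> {..<(2::nat)^k}" "?f s = ?f t"
    then show "s = t" by (intro dot_inj) (auto simp: map_eq_conv)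
  qed
  have fin: "finite (answer (Qk k) DD)"
  proof (rule finite_subset)
    show "answer (Qk k) DD \<subseteq> {xs. set xs \<subseteq> {0,1} \<and> length xs = 2^k}"
    proof
      fix x assume "x \<in> answer (Qk k) DD"
      then obtain \<theta> where x: "x = map \<theta> [0..<2^k]" and
        h: "\<forall>(R, u)\<in>set (body (Qk k)). map \<theta> u \<in> DD R"
        unfolding answer_def head_Qk by blast
      have "\<theta> v \<in> {0,1}" if "v < 2^k" for v
      proof -
        have "(0, [v, v, v XOR v]) \<in> set (body (Qk k))" unfolding body_Qk using that by blast
        with h have "map \<theta> [v, v, v XOR v] \<in> DD 0" by fastforce
        then show ?thesis unfolding DD_def by auto
      qed
      then show "x \<in> {xs. set xs \<subseteq> {0,1} \<and> length xs = 2^k}" unfolding x by fastforce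
    qed
    show "finite {xs. set xs \<subseteq> {0::nat,1} \<and> length xs = 2^k}"
      by (rule finite_lists_length_eq) simp
  qed
  have "card (?f ` {..<2^k}) = 2^k" using card_image[OF inj] by simp
  then show ?thesis using card_mono[OF fin sub] by simp
qed




theorem theorem4p2:
  fixes \<alpha> :: real
  shows "\<exists>ar Q F D. cq_wf ar Q \<and> fds_wf ar F \<and> db_wf ar D \<and> satisfies_fds D F \<and>
    real (card (answer Q D)) > real (rmax Q D) powr (\<alpha> * color_number F (chase F Q))"
proof -
  define k where "k = nat \<lceil>4 * \<bar>\<alpha>\<bar>\<rceil> + 1"
  let ?ar = "\<lambda>_::nat. 3::nat"
  have cq: "cq_wf ?ar (Qk k)"
  proof -
    have mem: "(0, [0, 0, 0 XOR 0]) \<in> set (body (Qk k))" unfolding body_Qk by force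
    have "set (head_vars (Qk k)) \<subseteq> body_vars (Qk k)"
    proof
      fix v assume "v \<in> set (head_vars (Qk k))"
      then have "(0, [v, v, v XOR v]) \<in> set (body (Qk k))" unfolding head_Qk body_Qk by force
      then show "v \<in> body_vars (Qk k)" unfolding body_vars_def by force
    qed
    moreover have "\<forall>(R, u)\<in>set (body (Qk k)). length u = 3" unfolding body_Qk by auto
    ultimately show ?thesis unfolding cq_wf_def using mem by auto
  qed
  have fw: "fds_wf ?ar FF" unfolding fds_wf_def FF_def by auto
  have dw: "db_wf ?ar DD" unfolding db_wf_def DD_def by auto
  have sat: "satisfies_fds DD FF" unfolding satisfies_fds_def FF_def DD_def by auto
  have C: "0 \<le> color_number FF (chase FF (Qk k))" "color_number FF (chase FF (Qk k)) \<le> 2"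
    using cn_bounds[of k] unfolding chase_Qk cn_dedup by auto
  have e: "\<alpha> * color_number FF (chase FF (Qk k)) \<le> 2 * \<bar>\<alpha>\<bar>"
  proof -
    have "\<alpha> * color_number FF (chase FF (Qk k)) \<le> \<bar>\<alpha>\<bar> * color_number FF (chase FF (Qk k))"
      using C by (intro mult_right_mono) auto
    also have "\<dots> \<le> \<bar>\<alpha>\<bar> * 2" using C by (intro mult_left_mono) auto
    finally show ?thesis by simp
  qed
  have "real (rmax (Qk k) DD) powr (\<alpha> * color_number FF (chase FF (Qk k))) \<le> 4 powr (2 * \<bar>\<alpha>\<bar>)"
    unfolding rmax_Qk using e by (simp add: powr_mono)
  also have "(4::real) powr (2 * \<bar>\<alpha>\<bar>) = 2 powr (4 * \<bar>\<alpha>\<bar>)"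
  proof -
    have "(4::real) powr (2 * \<bar>\<alpha>\<bar>) = (2 powr 2) powr (2 * \<bar>\<alpha>\<bar>)" by simp
    also have "\<dots> = 2 powr (2 * (2 * \<bar>\<alpha>\<bar>))" by (rule powr_powr)
    finally show ?thesis by simp
  qed
  also have "\<dots> < 2 powr (real k)"
    unfolding k_def by (intro powr_less_mono) linarith+
  also have "\<dots> = real (2^k)" by (simp add: powr_realpow)
  also have "\<dots> \<le> real (card (answer (Qk k) DD))" using answer_big[of k] by linarith
  finally show ?thesis using cq fw dw sat by blast
qed
end
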